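(* Let $A$ be an $\mathbb N$-graded $k$-algebra generated by $A_1$ over $A_0$, and let $M$ be a point module over $A$. Then $\mathrm{End}_{\mathrm{QGr}\,A}(\pi^*M)\cong k$.
   Context: $k$ is a field. A point module is a graded right $A$-module $M=\bigoplus_{i\ge0}M_i$ with $M=M_0A$ and $\dim_kM_i=1$ for all $i\ge0$. $\mathrm{QGr}\,A$ is the quotient of the category of $\mathbb Z$-graded right $A$-modules by the torsion modules (modules each of whose elements $m$ satisfies $mA_{\ge n}=0$ for some $n$), with quotient functor $\pi^*$. *)

theory Defs
  imports Main
begin

(* The algebra A is the whole type 'a (a not necessarily commutative ring with 1).
   The k-algebra structure is a ring homomorphism phi : k -> A with central image. *)

definition direct_sum_decomp :: "('i \<Rightarrow> 'x::comm_monoid_add set) \<Rightarrow> bool" where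
  "direct_sum_decomp G \<longleftrightarrow>
     (\<forall>x. \<exists>!c :: 'i \<Rightarrow> 'x. finite {i. c i \<noteq> 0} \<and> (\<forall>i. c i \<in> G i)
            \<and> x = (\<Sum>i\<in>{i. c i \<noteq> 0}. c i))"

definition additive_subgroup :: "'x::ab_group_add set \<Rightarrow> bool" where
  "additive_subgroup S \<longleftrightarrow> 0 \<in> S \<and> (\<forall>x\<in>S. \<forall>y\<in>S. x + y \<in> S \<and> - x \<in> S)"

inductive_set ring_gen :: "'a::ring_1 set \<Rightarrow> 'a set" for S where
  base: "x \<in> S \<Longrightarrow> x \<in> ring_gen S"
| zero: "0 \<in> ring_gen S"
| one: "1 \<in> ring_gen S"
| add: "x \<in> ring_gen S \<Longrightarrow> y \<in> ring_gen S \<Longrightarrow> x + y \<in> ring_gen S"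
| neg: "x \<in> ring_gen S \<Longrightarrow> - x \<in> ring_gen S"
| mult: "x \<in> ring_gen S \<Longrightarrow> y \<in> ring_gen S \<Longrightarrow> x * y \<in> ring_gen S"

definition graded_k_algebra :: "('k::field \<Rightarrow> 'a::ring_1) \<Rightarrow> (nat \<Rightarrow> 'a set) \<Rightarrow> bool" where
  "graded_k_algebra phi Agr \<longleftrightarrow>
     (\<forall>c d. phi (c + d) = phi c + phi d \<and> phi (c * d) = phi c * phi d) \<and> phi 1 = 1 \<and>
     (\<forall>c a. phi c * a = a * phi c) \<and>
     (\<forall>i. additive_subgroup (Agr i) \<and> (\<forall>c. \<forall>a\<in>Agr i. phi c * a \<in> Agr i)) \<and>
     (\<forall>i j. \<forall>a\<in>Agr i. \<forall>b\<in>Agr j. a * b \<in> Agr (i + j)) \<and>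
     direct_sum_decomp Agr"

definition generated_in_degree_one :: "(nat \<Rightarrow> 'a::ring_1 set) \<Rightarrow> bool" where
  "generated_in_degree_one Agr \<longleftrightarrow> ring_gen (Agr 0 \<union> Agr 1) = UNIV"

definition Age :: "(nat \<Rightarrow> 'a::ring_1 set) \<Rightarrow> nat \<Rightarrow> 'a set" where
  "Age Agr n = {a. \<exists>ps. a = sum_list (map snd ps) \<and> (\<forall>(i, b)\<in>set ps. n \<le> i \<and> b \<in> Agr i)}"

(* Z-graded right A-module structure on the whole type 'm:
   act x a = x a, Mgr i = M_i *)
definition graded_right_module ::
  "(nat \<Rightarrow> 'a::ring_1 set) \<Rightarrow> ('m::ab_group_add \<Rightarrow> 'a \<Rightarrow> 'm) \<Rightarrow> (int \<Rightarrow> 'm set) \<Rightarrow> bool" where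
  "graded_right_module Agr act Mgr \<longleftrightarrow>
     (\<forall>x y a. act (x + y) a = act x a + act y a) \<and>
     (\<forall>x a b. act x (a + b) = act x a + act x b) \<and>
     (\<forall>x a b. act x (a * b) = act (act x a) b) \<and>
     (\<forall>x. act x 1 = x) \<and>
     (\<forall>i. additive_subgroup (Mgr i)) \<and>
     (\<forall>i j. \<forall>x\<in>Mgr i. \<forall>a\<in>Agr j. act x a \<in> Mgr (i + int j)) \<and>
     direct_sum_decomp Mgr"

(* point module: M = \<Oplus>_{i>=0} M_i, M = M_0 A, dim_k M_i = 1 for all i >= 0 *)
definition point_module ::
  "('k::field \<Rightarrow> 'a::ring_1) \<Rightarrow> (nat \<Rightarrow> 'a set) \<Rightarrow> ('m::ab_group_add \<Rightarrow> 'a \<Rightarrow> 'm) \<Rightarrow> (int \<Rightarrow> 'm set) \<Rightarrow> bool" where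
  "point_module phi Agr act Mgr \<longleftrightarrow>
     graded_right_module Agr act Mgr \<and>
     (\<forall>i<0. Mgr i = {0}) \<and>
     (\<forall>x. \<exists>ps. x = sum_list (map (\<lambda>(m, a). act m a) ps) \<and> (\<forall>(m, a)\<in>set ps. m \<in> Mgr 0)) \<and>
     (\<forall>i\<ge>0. \<exists>v\<in>Mgr i. v \<noteq> 0 \<and> Mgr i = {act v (phi c) | c. True})"

definition graded_submodule ::
  "('m::ab_group_add \<Rightarrow> 'a::ring_1 \<Rightarrow> 'm) \<Rightarrow> (int \<Rightarrow> 'm set) \<Rightarrow> 'm set \<Rightarrow> bool" where
  "graded_submodule act Mgr S \<longleftrightarrow>
     additive_subgroup S \<and> (\<forall>x\<in>S. \<forall>a. act x a \<in> S) \<and>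
     (\<forall>x\<in>S. \<exists>c :: int \<Rightarrow> 'm. finite {i. c i \<noteq> 0} \<and> (\<forall>i. c i \<in> Mgr i \<inter> S)
            \<and> x = (\<Sum>i\<in>{i. c i \<noteq> 0}. c i))"

definition torsion_sub ::
  "(nat \<Rightarrow> 'a::ring_1 set) \<Rightarrow> ('m::ab_group_add \<Rightarrow> 'a \<Rightarrow> 'm) \<Rightarrow> 'm set \<Rightarrow> bool" where
  "torsion_sub Agr act N \<longleftrightarrow> (\<forall>x\<in>N. \<exists>n. \<forall>a\<in>Age Agr n. act x a = 0)"

definition torsion_quot ::
  "(nat \<Rightarrow> 'a::ring_1 set) \<Rightarrow> ('m::ab_group_add \<Rightarrow> 'a \<Rightarrow> 'm) \<Rightarrow> 'm set \<Rightarrow> bool" where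
  "torsion_quot Agr act M' \<longleftrightarrow> (\<forall>x. \<exists>n. \<forall>a\<in>Age Agr n. act x a \<in> M')"

(* f represents a morphism M' -> M/N' in Gr A (degree-preserving A-linear map),
   f x being a representative of the image class *)
definition gr_hom_mod ::
  "('m::ab_group_add \<Rightarrow> 'a::ring_1 \<Rightarrow> 'm) \<Rightarrow> (int \<Rightarrow> 'm set) \<Rightarrow> 'm set \<Rightarrow> 'm set \<Rightarrow> ('m \<Rightarrow> 'm) \<Rightarrow> bool" where
  "gr_hom_mod act Mgr M' N' f \<longleftrightarrow>
     (\<forall>x\<in>M'. \<forall>y\<in>M'. f (x + y) - f x - f y \<in> N') \<and>
     (\<forall>x\<in>M'. \<forall>a. f (act x a) - act (f x) a \<in> N') \<and>
     (\<forall>i. \<forall>x\<in>M' \<inter> Mgr i. \<exists>y\<in>Mgr i. f x - y \<in> N')"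

(* representatives of End_{QGr A}(pi^* M) in Gabriel's construction of the quotient category:
   Hom(pi M, pi M) = colim_{M',N'} Hom_{Gr A}(M', M/N'), M/M' torsion, N' torsion *)
definition qgr_end_rep ::
  "(nat \<Rightarrow> 'a::ring_1 set) \<Rightarrow> ('m::ab_group_add \<Rightarrow> 'a \<Rightarrow> 'm) \<Rightarrow> (int \<Rightarrow> 'm set)
     \<Rightarrow> 'm set \<times> 'm set \<times> ('m \<Rightarrow> 'm) \<Rightarrow> bool" where
  "qgr_end_rep Agr act Mgr t \<longleftrightarrow> (case t of (M', N', f) \<Rightarrow>
     graded_submodule act Mgr M' \<and> torsion_quot Agr act M' \<and>
     graded_submodule act Mgr N' \<and> torsion_sub Agr act N' \<and>
     gr_hom_mod act Mgr M' N' f)"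

definition qgr_end_eq ::
  "(nat \<Rightarrow> 'a::ring_1 set) \<Rightarrow> ('m::ab_group_add \<Rightarrow> 'a \<Rightarrow> 'm) \<Rightarrow> (int \<Rightarrow> 'm set)
     \<Rightarrow> 'm set \<times> 'm set \<times> ('m \<Rightarrow> 'm) \<Rightarrow> 'm set \<times> 'm set \<times> ('m \<Rightarrow> 'm) \<Rightarrow> bool" where
  "qgr_end_eq Agr act Mgr t1 t2 \<longleftrightarrow> (case t1 of (M1, N1, f1) \<Rightarrow> case t2 of (M2, N2, f2) \<Rightarrow>
     (\<exists>M3 N3. graded_submodule act Mgr M3 \<and> torsion_quot Agr act M3 \<and> M3 \<subseteq> M1 \<inter> M2 \<and>
        graded_submodule act Mgr N3 \<and> torsion_sub Agr act N3 \<and> N1 \<union> N2 \<subseteq> N3 \<and>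
        (\<forall>x\<in>M3. f1 x - f2 x \<in> N3)))"

(* the structure map k -> End_{QGr A}(pi^* M): c |-> class of (right multiplication by phi c) *)
definition qgr_scalar ::
  "('k::field \<Rightarrow> 'a::ring_1) \<Rightarrow> ('m::ab_group_add \<Rightarrow> 'a \<Rightarrow> 'm) \<Rightarrow> 'k \<Rightarrow> 'm set \<times> 'm set \<times> ('m \<Rightarrow> 'm)" where
  "qgr_scalar phi act c = (UNIV, {0}, (\<lambda>x. act x (phi c)))"

end

theory Submission
  imports Defs
begin

locale PM =
  fixes phi :: "'k::field \<Rightarrow> 'a::ring_1"
    and Agr :: "nat \<Rightarrow> 'a set"
    and act :: "'m::ab_group_add \<Rightarrow> 'a \<Rightarrow> 'm"
    and Mgr :: "int \<Rightarrow> 'm set"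
  assumes A: "graded_k_algebra phi Agr"
    and G: "generated_in_degree_one Agr"
    and P: "point_module phi Agr act Mgr"
begin

lemma act_add1: "act (x + y) a = act x a + act y a"
  using P unfolding point_module_def graded_right_module_def by blast
lemma act_add2: "act x (a + b) = act x a + act x b"
  using P unfolding point_module_def graded_right_module_def by blast
lemma act_mult: "act x (a * b) = act (act x a) b"
  using P unfolding point_module_def graded_right_module_def by blast
lemma act_one: "act x 1 = x"
  using P unfolding point_module_def graded_right_module_def by blast
lemma act_zero1: "act 0 a = 0"
  using act_add1[of 0 0 a] by simp
lemma act_zero2: "act x 0 = 0"
  using act_add2[of x 0 0] by simp
lemma act_neg2: "act x (- a) = - act x a"
  using act_add2[of x a "-a"] act_zero2 by (metis add.right_inverse add_eq_0_iff)
lemma act_diff2: "act x (a - b) = act x a - act x b"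
  using act_add2[of x a "-b"] act_neg2 by simp
lemma act_sum1: "finite S \<Longrightarrow> act (\<Sum>i\<in>S. g i) a = (\<Sum>i\<in>S. act (g i) a)"
  by (induction S rule: finite_induct) (auto simp: act_zero1 act_add1)

lemma phi_add: "phi (c + d) = phi c + phi d"
  using A unfolding graded_k_algebra_def by blast
lemma phi_mult: "phi (c * d) = phi c * phi d"
  using A unfolding graded_k_algebra_def by blast
lemma phi_one: "phi 1 = 1"
  using A unfolding graded_k_algebra_def by blast
lemma phi_central: "phi c * a = a * phi c"
  using A unfolding graded_k_algebra_def by blast
lemma phi_zero: "phi 0 = 0"
  using phi_add[of 0 0] by simp
lemma phi_neg: "phi (- c) = - phi c"
  using phi_add[of c "-c"] phi_zero by (metis add.right_inverse add_eq_0_iff)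
lemma phi_diff: "phi (c - d) = phi c - phi d"
  using phi_add[of c "-d"] phi_neg by simp

lemma Agr_mult: "a \<in> Agr i \<Longrightarrow> b \<in> Agr j \<Longrightarrow> a * b \<in> Agr (i + j)"
  using A unfolding graded_k_algebra_def by blast
lemma Agr_phi: "a \<in> Agr i \<Longrightarrow> phi c * a \<in> Agr i"
  using A unfolding graded_k_algebra_def by blast

lemma Mgr_sub: "additive_subgroup (Mgr i)"
  using P unfolding point_module_def graded_right_module_def by blast
lemma Mgr_zero: "0 \<in> Mgr i" using Mgr_sub unfolding additive_subgroup_def by blast
lemma Mgr_add: "x \<in> Mgr i \<Longrightarrow> y \<in> Mgr i \<Longrightarrow> x + y \<in> Mgr i"
  using Mgr_sub unfolding additive_subgroup_def by blast
lemma Mgr_neg: "x \<in> Mgr i \<Longrightarrow> - x \<in> Mgr i"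
  using Mgr_sub unfolding additive_subgroup_def by blast
lemma Mgr_act: "x \<in> Mgr i \<Longrightarrow> a \<in> Agr j \<Longrightarrow> act x a \<in> Mgr (i + int j)"
  using P unfolding point_module_def graded_right_module_def by blast
lemma dsM: "direct_sum_decomp Mgr"
  using P unfolding point_module_def graded_right_module_def by blast
lemma Mneg: "i < 0 \<Longrightarrow> Mgr i = {0}"
  using P unfolding point_module_def by blast
lemma Mgen: "\<exists>ps. x = sum_list (map (\<lambda>(m, a). act m a) ps) \<and> (\<forall>(m, a)\<in>set ps. m \<in> Mgr 0)"
  using P unfolding point_module_def by blast
lemma Mdim: "i \<ge> 0 \<Longrightarrow> \<exists>v\<in>Mgr i. v \<noteq> 0 \<and> Mgr i = {act v (phi c) | c. True}"
  using P unfolding point_module_def by blast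

definition dec :: "'m \<Rightarrow> int \<Rightarrow> 'm" where
  "dec x = (THE c. finite {i. c i \<noteq> 0} \<and> (\<forall>i. c i \<in> Mgr i) \<and> x = (\<Sum>i\<in>{i. c i \<noteq> 0}. c i))"

lemma dec_prop: "finite {i. dec x i \<noteq> 0} \<and> (\<forall>i. dec x i \<in> Mgr i) \<and> x = (\<Sum>i\<in>{i. dec x i \<noteq> 0}. dec x i)"
proof -
  have ex: "\<exists>!c. finite {i. c i \<noteq> 0} \<and> (\<forall>i. c i \<in> Mgr i) \<and> x = (\<Sum>i\<in>{i. c i \<noteq> 0}. c i)"
    using dsM unfolding direct_sum_decomp_def by blast
  show ?thesis unfolding dec_def by (rule theI'[OF ex])
qed

lemma dec_char:
  assumes "finite S" "\<forall>i. i \<notin> S \<longrightarrow> c i = 0" "\<forall>i. c i \<in> Mgr i" "x = (\<Sum>i\<in>S. c i)"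
  shows "dec x = c"
proof -
  have sub: "{i. c i \<noteq> 0} \<subseteq> S" using assms(2) by blast
  have fin: "finite {i. c i \<noteq> 0}" using sub assms(1) finite_subset by blast
  have "(\<Sum>i\<in>S. c i) = (\<Sum>i\<in>{i. c i \<noteq> 0}. c i)"
    by (rule sum.mono_neutral_right[OF assms(1) sub]) auto
  hence Pc: "finite {i. c i \<noteq> 0} \<and> (\<forall>i. c i \<in> Mgr i) \<and> x = (\<Sum>i\<in>{i. c i \<noteq> 0}. c i)"
    using fin assms by simp
  show ?thesis unfolding dec_def
  proof (rule the1_equality)
    show "\<exists>!c. finite {i. c i \<noteq> 0} \<and> (\<forall>i. c i \<in> Mgr i) \<and> x = (\<Sum>i\<in>{i. c i \<noteq> 0}. c i)"
      using dsM unfolding direct_sum_decomp_def by blast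
  qed (rule Pc)
qed

lemma dec_superset:
  assumes "finite S" "{i. dec x i \<noteq> 0} \<subseteq> S" shows "x = (\<Sum>i\<in>S. dec x i)"
proof -
  have "(\<Sum>i\<in>S. dec x i) = (\<Sum>i\<in>{i. dec x i \<noteq> 0}. dec x i)"
    by (rule sum.mono_neutral_right[OF assms]) blast
  thus ?thesis using dec_prop[of x] by simp
qed

lemma dec_add: "dec (x + y) = (\<lambda>i. dec x i + dec y i)"
proof (rule dec_char[where S="{i. dec x i \<noteq> 0} \<union> {i. dec y i \<noteq> 0}"])
  let ?S = "{i. dec x i \<noteq> 0} \<union> {i. dec y i \<noteq> 0}"
  show fS: "finite ?S" using dec_prop by auto
  show "\<forall>i. i \<notin> ?S \<longrightarrow> dec x i + dec y i = 0" by auto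
  show "\<forall>i. dec x i + dec y i \<in> Mgr i" using dec_prop Mgr_add by blast
  have "x = (\<Sum>i\<in>?S. dec x i)" by (rule dec_superset[OF fS]) auto
  moreover have "y = (\<Sum>i\<in>?S. dec y i)" by (rule dec_superset[OF fS]) auto
  ultimately show "x + y = (\<Sum>i\<in>?S. dec x i + dec y i)" by (simp add: sum.distrib)
qed

lemma dec_neg: "dec (- x) = (\<lambda>i. - dec x i)"
proof -
  have "dec (x + - x) = (\<lambda>i. dec x i + dec (- x) i)" by (rule dec_add)
  hence "\<And>i. dec x i + dec (- x) i = dec 0 i" by simp
  moreover have "dec 0 = (\<lambda>i. 0)" by (rule dec_char[where S="{}"]) (auto simp: Mgr_zero)
  ultimately show ?thesis by (auto simp: fun_eq_iff add_eq_0_iff)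
qed

lemma dec_zero: "dec 0 = (\<lambda>i. 0)"
  by (rule dec_char[where S="{}"]) (auto simp: Mgr_zero)

lemma dec_hom: "x \<in> Mgr k \<Longrightarrow> dec x = (\<lambda>i. if i = k then x else 0)"
  by (rule dec_char[where S="{k}"]) (auto simp: Mgr_zero)

lemma dec_sum: "finite T \<Longrightarrow> dec (\<Sum>t\<in>T. g t) = (\<lambda>i. \<Sum>t\<in>T. dec (g t) i)"
  by (induction T rule: finite_induct) (auto simp: dec_zero dec_add)

lemma dec_sum_list: "dec (sum_list xs) = (\<lambda>i. sum_list (map (\<lambda>x. dec x i) xs))"
  by (induction xs) (auto simp: dec_zero dec_add)


lemma act_neg1: "act (- x) a = - act x a"
  using act_add1[of x "-x" a] act_zero1 by (metis add.right_inverse add_eq_0_iff)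

definition U :: "int \<Rightarrow> 'm set" where "U j = {y. \<forall>k>j. dec y k = 0}"

lemma U_sum: "finite T \<Longrightarrow> \<forall>t\<in>T. g t \<in> U j \<Longrightarrow> (\<Sum>t\<in>T. g t) \<in> U j"
  unfolding U_def by (simp add: dec_sum)

lemma U_add: "x \<in> U j \<Longrightarrow> y \<in> U j \<Longrightarrow> x + y \<in> U j"
  unfolding U_def by (simp add: dec_add)

lemma U_zero: "0 \<in> U j"
  unfolding U_def by (simp add: dec_zero)

lemma U_sum_list: "\<forall>x\<in>set xs. x \<in> U j \<Longrightarrow> sum_list xs \<in> U j"
  by (induction xs) (auto simp: U_zero U_add)

lemma U_hom: "x \<in> Mgr l \<Longrightarrow> l \<le> j \<Longrightarrow> x \<in> U j"
  unfolding U_def by (simp add: dec_hom)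

lemma L1:
  assumes j0: "j \<ge> 0"
  shows "\<exists>x\<in>Mgr j. \<exists>b\<in>Agr 1. act x b \<noteq> 0"
proof (rule ccontr)
  assume "\<not> ?thesis"
  hence H: "\<And>x b. x \<in> Mgr j \<Longrightarrow> b \<in> Agr 1 \<Longrightarrow> act x b = 0" by blast
  have key: "act y b \<in> U j" if y: "y \<in> U j" and b: "b \<in> Agr 0 \<union> Agr 1" for y b
  proof -
    let ?S = "{i. dec y i \<noteq> 0}"
    have fS: "finite ?S" using dec_prop by blast
    have ysum: "y = (\<Sum>i\<in>?S. dec y i)" by (rule dec_superset[OF fS]) auto
    have "act y b = act (\<Sum>i\<in>?S. dec y i) b" using ysum by (rule arg_cong)
    also have "\<dots> = (\<Sum>i\<in>?S. act (dec y i) b)" by (rule act_sum1[OF fS])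
    finally have eq: "act y b = (\<Sum>i\<in>?S. act (dec y i) b)" .
    have "act (dec y i) b \<in> U j" if iS: "i \<in> ?S" for i
    proof -
      have ij: "i \<le> j"
      proof (rule ccontr)
        assume "\<not> i \<le> j"
        hence "i > j" by simp
        thus False using y iS unfolding U_def by auto
      qed
      have di: "dec y i \<in> Mgr i" using dec_prop by blast
      show ?thesis
      proof (cases "b \<in> Agr 0")
        case True
        then show ?thesis using Mgr_act[OF di True] ij U_hom by simp
      next
        case False
        hence b1: "b \<in> Agr 1" using b by blast
        show ?thesis
        proof (cases "i = j")
          case True
          then show ?thesis using H[OF _ b1] di U_zero by simp
        next
          case False
          then show ?thesis using Mgr_act[OF di b1] ij U_hom[of _ "i + 1" j] by simp
        qed
      qed
    qed
    thus ?thesis using eq U_sum[OF fS] by simp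
  qed
  have B: "\<forall>y\<in>U j. act y b \<in> U j" if "b \<in> ring_gen (Agr 0 \<union> Agr 1)" for b
    using that
  proof (induction rule: ring_gen.induct)
    case (base x) then show ?case using key by blast
  next
    case zero then show ?case by (simp add: act_zero2 U_zero)
  next
    case one then show ?case by (simp add: act_one)
  next
    case (add x y) then show ?case by (simp add: act_add2 U_add)
  next
    case (neg x) then show ?case unfolding U_def by (simp add: act_neg2 dec_neg)
  next
    case (mult x y) then show ?case by (simp add: act_mult)
  qed
  have allB: "\<forall>y\<in>U j. act y b \<in> U j" for b
    using B G unfolding generated_in_degree_one_def by blast
  obtain z where z: "z \<in> Mgr (j + 1)" "z \<noteq> 0" using Mdim[of "j+1"] j0 by auto
  obtain ps where ps: "z = sum_list (map (\<lambda>(m, a). act m a) ps)" "\<forall>(m, a)\<in>set ps. m \<in> Mgr 0"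
    using Mgen by blast
  have "\<forall>x\<in>set (map (\<lambda>(m, a). act m a) ps). x \<in> U j"
  proof
    fix x assume "x \<in> set (map (\<lambda>(m, a). act m a) ps)"
    then obtain m a where ma: "(m, a) \<in> set ps" "x = act m a" by auto
    have "m \<in> U j" using ps(2) ma(1) U_hom[of m 0 j] j0 by auto
    thus "x \<in> U j" using allB ma(2) by blast
  qed
  hence "z \<in> U j" using ps(1) U_sum_list by simp
  hence "dec z (j+1) = 0" unfolding U_def by simp
  thus False using dec_hom[OF z(1)] z(2) by simp
qed


lemma act_phi_mult: "act (act y (phi c)) (phi d) = act y (phi (c * d))"
  by (simp add: act_mult phi_mult)

lemma Mnonneg: "y \<in> Mgr j \<Longrightarrow> y \<noteq> 0 \<Longrightarrow> j \<ge> 0"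
  using Mneg[of j] by force

lemma one_dim:
  assumes y: "y \<in> Mgr j" "y \<noteq> 0" and x: "x \<in> Mgr j"
  shows "\<exists>e. x = act y (phi e)"
proof -
  have "j \<ge> 0" using Mnonneg y by blast
  then obtain v where v: "v \<in> Mgr j" "Mgr j = {act v (phi c) | c. True}" using Mdim by blast
  obtain c1 where c1: "y = act v (phi c1)" using y v by blast
  obtain c2 where c2: "x = act v (phi c2)" using x v by blast
  have "c1 \<noteq> 0" using c1 y(2) by (auto simp: phi_zero act_zero2)
  hence "act y (phi (c2 / c1)) = x" using c1 c2 act_phi_mult by simp
  thus ?thesis by metis
qed

lemma K:
  assumes y: "y \<in> Mgr j" "y \<noteq> 0"
  shows "\<exists>b\<in>Agr 1. act y b \<noteq> 0"
proof -
  obtain x b where xb: "x \<in> Mgr j" "b \<in> Agr 1" "act x b \<noteq> 0" using L1 Mnonneg[OF y] by blast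
  obtain e where "x = act y (phi e)" using one_dim[OF y xb(1)] by blast
  hence "act y (phi e * b) \<noteq> 0" using xb(3) by (simp add: act_mult)
  thus ?thesis using Agr_phi[OF xb(2)] by blast
qed

lemma K_iter:
  assumes y: "y \<in> Mgr j" "y \<noteq> 0"
  shows "\<exists>a\<in>Agr (Suc n). act y a \<noteq> 0 \<and> act y a \<in> Mgr (j + int (Suc n))"
proof (induction n)
  case 0
  then show ?case using K[OF y] Mgr_act[OF y(1)] by fastforce
next
  case (Suc n)
  then obtain a where a: "a \<in> Agr (Suc n)" "act y a \<noteq> 0" "act y a \<in> Mgr (j + int (Suc n))" by blast
  obtain b where b: "b \<in> Agr 1" "act (act y a) b \<noteq> 0" using K[OF a(3) a(2)] by blast
  have ab: "a * b \<in> Agr (Suc (Suc n))" using Agr_mult[OF a(1) b(1)] by simp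
  have "act y (a * b) \<in> Mgr (j + int (Suc n) + int 1)" using Mgr_act[OF a(3) b(1)] by (simp add: act_mult)
  hence m: "act y (a * b) \<in> Mgr (j + int (Suc (Suc n)))" by (simp add: add.assoc)
  have nz: "act y (a * b) \<noteq> 0" using b(2) by (simp add: act_mult)
  show ?case using ab m nz by blast
qed

lemma Age_in: "a \<in> Agr m \<Longrightarrow> n \<le> m \<Longrightarrow> a \<in> Age Agr n"
  unfolding Age_def by (rule CollectI, rule exI[of _ "[(m, a)]"]) auto

lemma torsion_hom_zero:
  assumes "x \<in> Mgr i" "\<forall>a\<in>Age Agr n. act x a = 0"
  shows "x = 0"
proof (rule ccontr)
  assume "x \<noteq> 0"
  then obtain a where "a \<in> Agr (Suc n)" "act x a \<noteq> 0" using K_iter assms(1) by blast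
  thus False using assms(2) Age_in[of a "Suc n" n] by auto
qed

lemma torsion_zero:
  assumes "graded_submodule act Mgr N" "torsion_sub Agr act N" "x \<in> N"
  shows "x = 0"
proof -
  obtain c where c: "finite {i. c i \<noteq> 0}" "\<forall>i. c i \<in> Mgr i \<inter> N" "x = (\<Sum>i\<in>{i. c i \<noteq> 0}. c i)"
    using assms(1,3) unfolding graded_submodule_def by blast
  have "c i = 0" for i
  proof -
    obtain n where "\<forall>a\<in>Age Agr n. act (c i) a = 0" using assms(2) c(2) unfolding torsion_sub_def by blast
    thus ?thesis using torsion_hom_zero c(2) by blast
  qed
  thus ?thesis using c(3) by simp
qed

lemma exists_nonzero:
  assumes "torsion_quot Agr act M3"
  shows "\<exists>w d. w \<in> M3 \<and> w \<in> Mgr (int d) \<and> w \<noteq> 0"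
proof -
  obtain v where v: "v \<in> Mgr 0" "v \<noteq> 0" using Mdim[of 0] by auto
  obtain n where n: "\<forall>a\<in>Age Agr n. act v a \<in> M3" using assms unfolding torsion_quot_def by blast
  obtain a where a: "a \<in> Agr (Suc n)" "act v a \<noteq> 0" "act v a \<in> Mgr (0 + int (Suc n))"
    using K_iter[OF v] by blast
  have "act v a \<in> M3" using n Age_in[OF a(1)] by simp
  thus ?thesis using a by (intro exI[of _ "act v a"] exI[of _ "Suc n"]) simp
qed

lemma cancel:
  assumes "y \<noteq> 0" "act y (phi c) = act y (phi d)"
  shows "c = d"
proof (rule ccontr)
  assume cd: "c \<noteq> d"
  have "act y (phi (c - d)) = 0" using assms(2) by (simp add: phi_diff act_diff2)
  hence "act (act y (phi (c - d))) (phi (inverse (c - d))) = 0" by (simp add: act_zero1)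
  hence "act y (phi 1) = 0" using cd by (simp add: act_phi_mult)
  thus False using assms(1) by (simp add: phi_one act_one)
qed


lemma part1:
  assumes rep: "qgr_end_rep Agr act Mgr (M', N', f)"
  shows "\<exists>c. qgr_end_eq Agr act Mgr (M', N', f) (qgr_scalar phi act c)"
proof -
  have gM: "graded_submodule act Mgr M'" and tM: "torsion_quot Agr act M'"
    and gN: "graded_submodule act Mgr N'" and tN: "torsion_sub Agr act N'"
    and hf: "gr_hom_mod act Mgr M' N' f"
    using rep unfolding qgr_end_rep_def by auto
  have N0: "x \<in> N' \<Longrightarrow> x = 0" for x using torsion_zero[OF gN tN] by blast
  have zN: "0 \<in> N'" using gN unfolding graded_submodule_def additive_subgroup_def by blast
  have fadd: "f (x + y) = f x + f y" if "x \<in> M'" "y \<in> M'" for x y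
    using hf that N0 unfolding gr_hom_mod_def by (metis diff_diff_eq eq_iff_diff_eq_0)
  have flin: "f (act x a) = act (f x) a" if "x \<in> M'" for x a
    using hf that N0 unfolding gr_hom_mod_def by (metis eq_iff_diff_eq_0)
  have fdeg: "f x \<in> Mgr i" if "x \<in> M'" "x \<in> Mgr i" for x i
    using hf that N0 unfolding gr_hom_mod_def by (metis IntI eq_iff_diff_eq_0)
  have Msub: "additive_subgroup M'" and Mact: "\<And>x a. x \<in> M' \<Longrightarrow> act x a \<in> M'"
    using gM unfolding graded_submodule_def by auto
  have zM: "0 \<in> M'" using Msub unfolding additive_subgroup_def by blast
  have f0: "f 0 = 0" using fadd[OF zM zM] by simp
  have scal_prop: "f (act y a) = act (act y a) (phi l)" if "y \<in> M'" "f y = act y (phi l)" for y a l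
  proof -
    have "f (act y a) = act y (phi l * a)" using flin[OF that(1)] that(2) by (simp add: act_mult)
    also have "\<dots> = act (act y a) (phi l)" by (simp add: phi_central act_mult)
    finally show ?thesis .
  qed
  have scal_uniq: "l = m" if H: "y \<in> M'" "y \<in> Mgr j" "y \<noteq> 0" "y' \<in> Mgr j" "y' \<noteq> 0"
    "f y = act y (phi l)" "f y' = act y' (phi m)" for y y' j l m
  proof -
    obtain e where e: "y' = act y (phi e)" using one_dim[OF H(2) H(3) H(4)] by blast
    have "f y' = act y' (phi l)" using scal_prop[OF H(1) H(6)] e by simp
    thus ?thesis using cancel[OF H(5)] H(7) by simp
  qed
  have scal_ex: "\<exists>l. f y = act y (phi l)" if "y \<in> M'" "y \<in> Mgr j" "y \<noteq> 0" for y j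
    using one_dim[OF that(2,3) fdeg[OF that(1,2)]] .
  obtain w0 d where w0: "w0 \<in> M'" "w0 \<in> Mgr (int d)" "w0 \<noteq> 0" using exists_nonzero[OF tM] by blast
  obtain l where l: "f w0 = act w0 (phi l)" using scal_ex[OF w0] by blast
  have hom: "f w = act w (phi l)" if w: "w \<in> M'" "w \<in> Mgr i" for w i
  proof (cases "w = 0")
    case True then show ?thesis using f0 by (simp add: act_zero1)
  next
    case False
    obtain i' where i': "i = int i'" using Mnonneg[OF w(2) False] nonneg_int_cases by metis
    obtain m where m: "f w = act w (phi m)" using scal_ex[OF w False] by blast
    obtain a where a: "a \<in> Agr (Suc d)" "act w a \<noteq> 0" "act w a \<in> Mgr (i + int (Suc d))"
      using K_iter[OF w(2) False] by blast
    obtain a' where a': "a' \<in> Agr (Suc i')" "act w0 a' \<noteq> 0" "act w0 a' \<in> Mgr (int d + int (Suc i'))"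
      using K_iter[OF w0(2,3)] by blast
    have deq: "int d + int (Suc i') = i + int (Suc d)" using i' by simp
    have "m = l"
      by (rule scal_uniq[OF Mact[OF w(1)] a(3) a(2) _ a'(2) scal_prop[OF w(1) m] scal_prop[OF w0(1) l]])
        (use a'(3) deq in \<open>metis\<close>)
    thus ?thesis using m by simp
  qed
  have fsum: "f (\<Sum>i\<in>T. c i) = (\<Sum>i\<in>T. f (c i)) \<and> (\<Sum>i\<in>T. c i) \<in> M'"
    if "finite T" "\<forall>i\<in>T. c i \<in> M'" for T and c :: "int \<Rightarrow> 'm"
    using that
  proof (induction T rule: finite_induct)
    case empty then show ?case using f0 zM by simp
  next
    case (insert x F)
    then show ?case using fadd Msub unfolding additive_subgroup_def by auto
  qed
  have all: "f x = act x (phi l)" if x: "x \<in> M'" for x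
  proof -
    obtain c where c: "finite {i. c i \<noteq> 0}" "\<forall>i. c i \<in> Mgr i \<inter> M'" "x = (\<Sum>i\<in>{i. c i \<noteq> 0}. c i)"
      using gM x unfolding graded_submodule_def by blast
    have "f x = (\<Sum>i\<in>{i. c i \<noteq> 0}. f (c i))" using fsum[OF c(1)] c(2,3) by auto
    also have "\<dots> = (\<Sum>i\<in>{i. c i \<noteq> 0}. act (c i) (phi l))"
      using hom c(2) by (intro sum.cong) auto
    also have "\<dots> = act x (phi l)" using act_sum1[OF c(1)] c(3) by simp
    finally show ?thesis .
  qed
  show ?thesis
    unfolding qgr_end_eq_def qgr_scalar_def
    apply (rule exI[of _ l])
    apply simp
    apply (rule exI[of _ M'], rule conjI[OF gM], rule conjI[OF tM])
    apply (rule conjI, simp)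
    apply (rule exI[of _ N'])
    using gN tN zN all by simp
qed

lemma part2:
  assumes "qgr_end_eq Agr act Mgr (qgr_scalar phi act c) (qgr_scalar phi act d)"
  shows "c = d"
proof -
  obtain M3 N3 where M3: "graded_submodule act Mgr M3" "torsion_quot Agr act M3"
    and N3: "graded_submodule act Mgr N3" "torsion_sub Agr act N3"
    and h: "\<forall>x\<in>M3. act x (phi c) - act x (phi d) \<in> N3"
    using assms unfolding qgr_end_eq_def qgr_scalar_def by auto
  obtain w d' where w: "w \<in> M3" "w \<in> Mgr (int d')" "w \<noteq> 0" using exists_nonzero[OF M3(2)] by blast
  have "act w (phi c) - act w (phi d) = 0" using torsion_zero[OF N3] h w(1) by blast
  thus ?thesis using cancel[OF w(3)] by simp
qed

end

theorem lemma10p1: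
  fixes phi :: "'k::field \<Rightarrow> 'a::ring_1"
    and Agr :: "nat \<Rightarrow> 'a set"
    and act :: "'m::ab_group_add \<Rightarrow> 'a \<Rightarrow> 'm"
    and Mgr :: "int \<Rightarrow> 'm set"
  assumes "graded_k_algebra phi Agr"
    and "generated_in_degree_one Agr"
    and "point_module phi Agr act Mgr"
  shows "(\<forall>t. qgr_end_rep Agr act Mgr t \<longrightarrow> (\<exists>c. qgr_end_eq Agr act Mgr t (qgr_scalar phi act c)))
       \<and> (\<forall>c d. qgr_end_eq Agr act Mgr (qgr_scalar phi act c) (qgr_scalar phi act d) \<longrightarrow> c = d)"
proof -
  interpret PM phi Agr act Mgr by (unfold_locales; fact)
  show ?thesis using part1 part2 by (metis prod_cases3)
qed

end
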